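(* Let $(X_{1,\infty},f_{1,\infty},\mu_{1,\infty})$ be a metric nonautonomous dynamical system. Suppose each $X_n$ is a disjoint union $X_n=Y_n\,\dot\cup\, Z_n$ of measurable sets with $f_n(Y_n)\subset Y_{n+1}$, $f_n(Z_n)\subset Z_{n+1}$, and $\mu_n(Y_n)=c$ for all $n$, where $0<c\le1$ is a constant. Let $g_n=f_n|_{Y_n}:Y_n\to Y_{n+1}$ and $\nu_n(A)=\mu_n(A)/c$ for measurable $A\subset Y_n$, so that $(Y_{1,\infty},g_{1,\infty},\nu_{1,\infty})$ is a metric NDS. Let $\mathcal{E}$ be an admissible class for $f_{1,\infty}$ such that $\mathcal{P}_{1,\infty}\in\mathcal{E}$ implies $\{\mathcal{P}_n\vee\{Y_n,Z_n\}\}_{n\ge1}\in\mathcal{E}$. Then \[ \mathcal{E}|_{Y_{1,\infty}}:=\{\mathcal{Q}_{1,\infty}\;:\;\exists\,\mathcal{P}_{1,\infty}\in\mathcal{E}\text{ with }\mathcal{Q}_n=\{Y_n\}\vee\mathcal{P}_n\text{ for all }n\} \] is an admissible class for $(Y_{1,\infty},g_{1,\infty})$ and $c\,h_{\mathcal{E}|_{Y_{1,\infty}}}(g_{1,\infty})\le h_{\mathcal{E}}(f_{1,\infty})$. If $c=1$, equality holds.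
   Context: A metric NDS consists of probability spaces $(X_n,\mathcal{A}_n,\mu_n)$ and measurable maps $f_n:X_n\to X_{n+1}$ with $f_n\mu_n=\mu_{n+1}$. $f_k^n=f_{k+n-1}\circ\cdots\circ f_k$, $f_k^{-n}$ = preimage. $\{Y_n\}\vee\mathcal{P}_n$ denotes the partition $\{Y_n\cap P:P\in\mathcal{P}_n\}$ of $Y_n$. $H_\mu(\mathcal{P})=-\sum_P\mu(P)\log\mu(P)$; $h(f_{1,\infty};\mathcal{P}_{1,\infty})=\limsup_n\frac1nH_{\mu_1}(\bigvee_{i=0}^{n-1}f_1^{-i}\mathcal{P}_{i+1})$ (and analogously for $g_{1,\infty}$ with $\nu_1$); $h_{\mathcal{E}}(f_{1,\infty})=\sup_{\mathcal{P}_{1,\infty}\in\mathcal{E}}h(f_{1,\infty};\mathcal{P}_{1,\infty})$. Admissible class for an NDS $f_{1,\infty}$: a nonempty class $\mathcal{E}$ of sequences of finite measurable partitions $\{\mathcal{P}_n\}$ of $X_n$ such that (A) for each member, $\#\mathcal{P}_n\le N$ for some $N$ and all $n$; (B) $\mathcal{E}$ is closed under passing to termwise coarser sequences; (C) if $\mathcal{P}_{1,\infty}\in\mathcal{E}$ and $m\ge1$, then the sequence $\{\bigvee_{i=0}^{m-1}f_k^{-i}\mathcal{P}_{k+i}\}_{k\ge1}$ belongs to $\mathcal{E}$. *)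

theory Defs
  imports "HOL-Probability.Probability"
begin

text \<open>A metric nonautonomous dynamical system: probability spaces M n and
  measurable maps f n : M n \<rightarrow> M (n+1) pushing M n forward to M (n+1).
  Indices start at 0 (the paper starts at 1).\<close>
definition metric_NDS :: "(nat \<Rightarrow> 'a measure) \<Rightarrow> (nat \<Rightarrow> 'a \<Rightarrow> 'a) \<Rightarrow> bool" where
  "metric_NDS M f \<longleftrightarrow>
     (\<forall>n. prob_space (M n)) \<and>
     (\<forall>n. f n \<in> measurable (M n) (M (Suc n))) \<and>
     (\<forall>n. distr (M n) (M (Suc n)) (f n) = M (Suc n))"

primrec fiter :: "(nat \<Rightarrow> 'a \<Rightarrow> 'a) \<Rightarrow> nat \<Rightarrow> nat \<Rightarrow> 'a \<Rightarrow> 'a" where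
  "fiter f k 0 = id"
| "fiter f k (Suc i) = f (k + i) \<circ> fiter f k i"

text \<open>Finite measurable partition of the space of M (empty blocks are harmless).\<close>
definition is_partition :: "'a measure \<Rightarrow> 'a set set \<Rightarrow> bool" where
  "is_partition M P \<longleftrightarrow> finite P \<and> P \<subseteq> sets M \<and> disjoint P \<and> \<Union>P = space M"

definition coarser :: "'a set set \<Rightarrow> 'a set set \<Rightarrow> bool" where
  "coarser Q P \<longleftrightarrow> (\<forall>A\<in>P. \<exists>B\<in>Q. A \<subseteq> B)"

definition pjoin :: "'a set set \<Rightarrow> 'a set set \<Rightarrow> 'a set set" where
  "pjoin P Q = {A \<inter> B | A B. A \<in> P \<and> B \<in> Q}"

definition joinN :: "(nat \<Rightarrow> 'a measure) \<Rightarrow> (nat \<Rightarrow> 'a \<Rightarrow> 'a) \<Rightarrow> (nat \<Rightarrow> 'a set set)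
                      \<Rightarrow> nat \<Rightarrow> nat \<Rightarrow> 'a set set" where
  "joinN M f P k n =
     {space (M k) \<inter> (\<Inter>i\<in>{..<n}. fiter f k i -` S i) | S. \<forall>i<n. S i \<in> P (k + i)}"

definition part_entropy :: "'a measure \<Rightarrow> 'a set set \<Rightarrow> real" where
  "part_entropy M P = - (\<Sum>A\<in>P. measure M A * ln (measure M A))"

definition seq_entropy :: "(nat \<Rightarrow> 'a measure) \<Rightarrow> (nat \<Rightarrow> 'a \<Rightarrow> 'a) \<Rightarrow> (nat \<Rightarrow> 'a set set) \<Rightarrow> ereal" where
  "seq_entropy M f P = limsup (\<lambda>n. ereal (part_entropy (M 0) (joinN M f P 0 n) / real n))"

definition class_entropy :: "(nat \<Rightarrow> 'a measure) \<Rightarrow> (nat \<Rightarrow> 'a \<Rightarrow> 'a) \<Rightarrow> (nat \<Rightarrow> 'a set set) set \<Rightarrow> ereal" where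
  "class_entropy M f E = (SUP P\<in>E. seq_entropy M f P)"

definition admissible :: "(nat \<Rightarrow> 'a measure) \<Rightarrow> (nat \<Rightarrow> 'a \<Rightarrow> 'a) \<Rightarrow> (nat \<Rightarrow> 'a set set) set \<Rightarrow> bool" where
  "admissible M f E \<longleftrightarrow>
     E \<noteq> {} \<and>
     (\<forall>P\<in>E. \<forall>n. is_partition (M n) (P n)) \<and>
     (\<forall>P\<in>E. \<exists>N::nat. \<forall>n. card (P n) \<le> N) \<and>
     (\<forall>P\<in>E. \<forall>Q. (\<forall>n. is_partition (M n) (Q n) \<and> coarser (Q n) (P n)) \<longrightarrow> Q \<in> E) \<and>
     (\<forall>P\<in>E. \<forall>m\<ge>1. (\<lambda>k. joinN M f P k m) \<in> E)"

end

theory Submission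
  imports Defs
begin


lemma fiter_Y:
  assumes "\<And>n. f n ` Y n \<subseteq> Y (Suc n)" "x \<in> Y k"
  shows "fiter f k i x \<in> Y (k+i)"
  using assms by (induction i) auto

lemma fiter_meas:
  assumes "metric_NDS M f"
  shows "fiter f k i \<in> measurable (M k) (M (k+i))"
proof (induction i)
  case 0 then show ?case by simp
next
  case (Suc i)
  have "f (k+i) \<in> measurable (M (k+i)) (M (Suc (k+i)))" using assms by (simp add: metric_NDS_def)
  then show ?case using Suc by (simp add: measurable_comp)
qed

lemma joinN_finite:
  assumes "\<And>j. finite (P j)"
  shows "finite (joinN M f P k n)"
proof -
  have "joinN M f P k n \<subseteq> (\<lambda>S. space (M k) \<inter> (\<Inter>i\<in>{..<n}. fiter f k i -` S i)) ` (PiE {..<n} (\<lambda>i. P (k+i)))"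
  proof
    fix B assume "B \<in> joinN M f P k n"
    then obtain S where S: "\<forall>i<n. S i \<in> P (k + i)" "B = space (M k) \<inter> (\<Inter>i\<in>{..<n}. fiter f k i -` S i)"
      unfolding joinN_def by blast
    have "restrict S {..<n} \<in> PiE {..<n} (\<lambda>i. P (k+i))" using S(1) by auto
    moreover have "B = space (M k) \<inter> (\<Inter>i\<in>{..<n}. fiter f k i -` (restrict S {..<n}) i)"
      using S(2) by auto
    ultimately show "B \<in> (\<lambda>S. space (M k) \<inter> (\<Inter>i\<in>{..<n}. fiter f k i -` S i)) ` (PiE {..<n} (\<lambda>i. P (k+i)))"
      by blast
  qed
  moreover have "finite (PiE {..<n} (\<lambda>i. P (k+i)))" using assms by (intro finite_PiE) auto
  ultimately show ?thesis by (meson finite_imageI finite_subset)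
qed

lemma phi_nonneg: "0 \<le> (x::real) \<Longrightarrow> x \<le> 1 \<Longrightarrow> 0 \<le> - (x * ln x)"
  by (cases "x = 0") (auto simp: mult_nonneg_nonpos)

lemma phi_scale:
  assumes "0 \<le> (x::real)" "0 < c" "c \<le> 1"
  shows "c * (- ((x/c) * ln (x/c))) \<le> - (x * ln x)"
proof (cases "x = 0")
  case False
  then have "x > 0" using assms by auto
  then have "ln (x/c) = ln x - ln c" using assms by (simp add: ln_div)
  moreover have "ln c \<le> 0" using assms by simp
  moreover have "c * (x/c) = x" using assms by simp
  moreover have "x * ln c \<le> 0" using \<open>ln c \<le> 0\<close> \<open>x>0\<close> by (simp add: mult_nonneg_nonpos)
  ultimately have "c * (- ((x/c) * ln (x/c))) = - (x * ln x) + x * ln c"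
    by (metis (no_types, lifting) mult.assoc mult_minus_right right_diff_distrib minus_diff_eq diff_conv_add_uminus add.commute)
  then show ?thesis using \<open>x * ln c \<le> 0\<close> by linarith
qed simp



locale T6 =
  fixes M :: "nat \<Rightarrow> 'a measure" and f :: "nat \<Rightarrow> 'a \<Rightarrow> 'a"
    and Y Z :: "nat \<Rightarrow> 'a set" and c :: real
    and E :: "(nat \<Rightarrow> 'a set set) set"
  assumes nds: "metric_NDS M f"
    and Ymeas: "\<And>n. Y n \<in> sets (M n)" and Zmeas: "\<And>n. Z n \<in> sets (M n)"
    and disj: "\<And>n. Y n \<inter> Z n = {}" and cover: "\<And>n. Y n \<union> Z n = space (M n)"
    and fY: "\<And>n. f n ` Y n \<subseteq> Y (Suc n)" and fZ: "\<And>n. f n ` Z n \<subseteq> Z (Suc n)"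
    and c_pos: "0 < c" and c_le: "c \<le> 1"
    and muY: "\<And>n. measure (M n) (Y n) = c"
    and adm: "admissible M f E"
    and EYZ: "\<And>P. P \<in> E \<Longrightarrow> (\<lambda>n. pjoin (P n) {Y n, Z n}) \<in> E"
begin

definition "nu = (\<lambda>n. scale_measure (ennreal (1 / c)) (restrict_space (M n) (Y n)))"

lemma prob: "prob_space (M n)" using nds by (simp add: metric_NDS_def)
lemma fmeas: "f n \<in> measurable (M n) (M (Suc n))" using nds by (simp add: metric_NDS_def)
lemma fdistr: "distr (M n) (M (Suc n)) (f n) = M (Suc n)" using nds by (simp add: metric_NDS_def)

lemma Ysub: "Y n \<subseteq> space (M n)" using cover by blast
lemma YI: "Y n \<inter> space (M n) \<in> sets (M n)" using Ymeas Ysub by (simp add: Int_absorb2)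

lemma space_nu: "space (nu n) = Y n"
  using Ysub by (auto simp: nu_def space_scale_measure space_restrict_space)

lemma sets_nu: "sets (nu n) = sets (restrict_space (M n) (Y n))"
  by (simp add: nu_def)

lemma sets_nu_iff: "A \<in> sets (nu n) \<longleftrightarrow> A \<subseteq> Y n \<and> A \<in> sets (M n)"
  using sets_restrict_space_iff[OF YI] by (simp add: sets_nu)

lemma emeasure_nu: "A \<subseteq> Y n \<Longrightarrow> emeasure (nu n) A = ennreal (1/c) * emeasure (M n) A"
  by (simp add: nu_def emeasure_restrict_space[OF YI])

lemma measure_nu: "A \<subseteq> Y n \<Longrightarrow> measure (nu n) A = (1/c) * measure (M n) A"
  using c_pos by (simp add: nu_def measure_restrict_space[OF YI])

lemma nds_nu: "metric_NDS nu f"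
  unfolding metric_NDS_def
proof (intro conjI allI)
  fix n
  show "prob_space (nu n)"
  proof (rule prob_spaceI)
    have "emeasure (nu n) (space (nu n)) = ennreal (1/c) * emeasure (M n) (Y n)"
      by (simp add: space_nu emeasure_nu)
    also have "\<dots> = ennreal (1/c) * ennreal c"
      using finite_measure.emeasure_eq_measure[OF prob_space.finite_measure[OF prob]] muY by simp
    also have "\<dots> = 1" using c_pos by (simp flip: ennreal_mult)
    finally show "emeasure (nu n) (space (nu n)) = 1" .
  qed
  have fm: "f n \<in> measurable (nu n) (nu (Suc n))"
    unfolding measurable_cong_sets[OF sets_nu sets_nu]
    by (rule measurable_restrict_space3[OF fmeas]) (use fY in blast)
  show "f n \<in> measurable (nu n) (nu (Suc n))" by (rule fm)
  show "distr (nu n) (nu (Suc n)) (f n) = nu (Suc n)"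
  proof (rule measure_eqI)
    show "sets (distr (nu n) (nu (Suc n)) (f n)) = sets (nu (Suc n))" by simp
    fix A assume "A \<in> sets (distr (nu n) (nu (Suc n)) (f n))"
    then have A: "A \<in> sets (nu (Suc n))" by simp
    then have AY: "A \<subseteq> Y (Suc n)" and AM: "A \<in> sets (M (Suc n))" by (auto simp: sets_nu_iff)
    have pre: "f n -` A \<inter> space (M n) = f n -` A \<inter> Y n"
      using AY fZ disj cover by blast
    have "emeasure (distr (nu n) (nu (Suc n)) (f n)) A = emeasure (nu n) (f n -` A \<inter> Y n)"
      by (simp add: emeasure_distr[OF fm A] space_nu)
    also have "\<dots> = ennreal (1/c) * emeasure (M n) (f n -` A \<inter> space (M n))"
      by (simp add: emeasure_nu pre)
    also have "emeasure (M n) (f n -` A \<inter> space (M n)) = emeasure (M (Suc n)) A"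
      using emeasure_distr[OF fmeas AM] fdistr by simp
    also have "ennreal (1/c) * emeasure (M (Suc n)) A = emeasure (nu (Suc n)) A"
      by (simp add: emeasure_nu AY)
    finally show "emeasure (distr (nu n) (nu (Suc n)) (f n)) A = emeasure (nu (Suc n)) A" .
  qed
qed

definition "EYL = {Q. \<exists>P\<in>E. \<forall>n. Q n = {Y n \<inter> A | A. A \<in> P n}}"

lemma Epart: "P \<in> E \<Longrightarrow> is_partition (M n) (P n)" using adm by (simp add: admissible_def)
lemma Ecard: "P \<in> E \<Longrightarrow> \<exists>N::nat. \<forall>n. card (P n) \<le> N" using adm by (simp add: admissible_def)
lemma Ecoarse: "P \<in> E \<Longrightarrow> (\<And>n. is_partition (M n) (Q n)) \<Longrightarrow> (\<And>n. coarser (Q n) (P n)) \<Longrightarrow> Q \<in> E"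
  using adm unfolding admissible_def by blast
lemma Ejoin: "P \<in> E \<Longrightarrow> m \<ge> 1 \<Longrightarrow> (\<lambda>k. joinN M f P k m) \<in> E"
  using adm unfolding admissible_def by blast
lemma Ene: "E \<noteq> {}" using adm by (simp add: admissible_def)

lemma img: "{Y n \<inter> A | A. A \<in> P n} = (\<inter>) (Y n) ` P n" by auto

lemma join_Y:
  "Y k \<inter> (\<Inter>i\<in>{..<m}. fiter f k i -` (Y (k+i) \<inter> A i)) = Y k \<inter> (space (M k) \<inter> (\<Inter>i\<in>{..<m}. fiter f k i -` A i))"
  using fiter_Y[of f Y, OF fY] Ysub by blast

lemma Y_ne: "Y n \<noteq> {}" using muY[of n] c_pos by auto

lemma EY_part: assumes "Q \<in> EYL" shows "is_partition (nu n) (Q n)"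
proof -
  obtain P where P: "P \<in> E" "\<And>n. Q n = (\<inter>) (Y n) ` P n" using assms unfolding EYL_def img by blast
  have pp: "is_partition (M n) (P n)" using Epart[OF P(1)] .
  show ?thesis unfolding is_partition_def P(2)
  proof (intro conjI)
    show "finite ((\<inter>) (Y n) ` P n)" using pp by (simp add: is_partition_def)
    show "(\<inter>) (Y n) ` P n \<subseteq> sets (nu n)" using pp Ymeas by (auto simp: is_partition_def sets_nu_iff)
    show "disjoint ((\<inter>) (Y n) ` P n)" using pp unfolding is_partition_def disjoint_def by blast
    show "\<Union> ((\<inter>) (Y n) ` P n) = space (nu n)" using pp Ysub by (auto simp: is_partition_def space_nu)
  qed
qed

lemma adm_nu: "admissible nu f EYL"
  unfolding admissible_def
proof (intro conjI)
  show "EYL \<noteq> {}"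
  proof -
    obtain P where "P \<in> E" using Ene by blast
    then have "(\<lambda>n. {Y n \<inter> A | A. A \<in> P n}) \<in> EYL" unfolding EYL_def by blast
    then show ?thesis by blast
  qed
  show "\<forall>P\<in>EYL. \<forall>n. is_partition (nu n) (P n)" using EY_part by blast
  show "\<forall>P\<in>EYL. \<exists>N::nat. \<forall>n. card (P n) \<le> N"
  proof
    fix Q assume "Q \<in> EYL"
    then obtain P where P: "P \<in> E" "\<And>n. Q n = (\<inter>) (Y n) ` P n" unfolding EYL_def img by blast
    obtain N where N: "\<And>n. card (P n) \<le> N" using Ecard[OF P(1)] by blast
    have "card (Q n) \<le> N" for n
      using P(2) N[of n] Epart[OF P(1), of n] card_image_le[of "P n" "(\<inter>) (Y n)"]
      by (simp add: is_partition_def)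
    then show "\<exists>N::nat. \<forall>n. card (Q n) \<le> N" by blast
  qed
  show "\<forall>P\<in>EYL. \<forall>Q. (\<forall>n. is_partition (nu n) (Q n) \<and> coarser (Q n) (P n)) \<longrightarrow> Q \<in> EYL"
  proof (intro ballI allI impI)
    fix Q Q' assume "Q \<in> EYL" and H: "\<forall>n. is_partition (nu n) (Q' n) \<and> coarser (Q' n) (Q n)"
    then obtain P where P: "P \<in> E" "\<And>n. Q n = (\<inter>) (Y n) ` P n" unfolding EYL_def img by blast
    define R where "R = (\<lambda>n. pjoin (P n) {Y n, Z n})"
    have R: "R \<in> E" using EYZ[OF P(1)] by (simp add: R_def)
    have Qp: "is_partition (nu n) (Q' n)" and Qc: "coarser (Q' n) (Q n)" for n using H by auto
    have Qf: "finite (Q' n)" and Qs: "Q' n \<subseteq> sets (nu n)" and Qd: "disjoint (Q' n)" and Qu: "\<Union> (Q' n) = Y n" for n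
      using Qp[of n] by (simp_all add: is_partition_def space_nu)
    have Qne: "Q' n \<noteq> {}" for n using Qu[of n] Y_ne[of n] by auto
    define B0 where "B0 n = (SOME B. B \<in> Q' n)" for n
    have B0: "B0 n \<in> Q' n" for n using Qne[of n] unfolding B0_def by (simp add: some_in_eq)
    have QY: "B \<subseteq> Y n" "B \<in> sets (M n)" if "B \<in> Q' n" for B n
      using Qs[of n] Qu[of n] that by (auto simp: sets_nu_iff)
    define g where "g n B = (if B = B0 n then B \<union> Z n else B)" for n B
    define P' where "P' n = g n ` Q' n" for n
    have P'part: "is_partition (M n) (P' n)" for n
      unfolding is_partition_def P'_def
    proof (intro conjI)
      show "finite (g n ` Q' n)" using Qf[of n] by simp
      show "g n ` Q' n \<subseteq> sets (M n)" using QY Zmeas by (auto simp: g_def)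
      show "disjoint (g n ` Q' n)"
        unfolding disjoint_def
      proof (intro ballI impI)
        fix a b assume "a \<in> g n ` Q' n" "b \<in> g n ` Q' n" "a \<noteq> b"
        then obtain A B where AB: "A \<in> Q' n" "B \<in> Q' n" "a = g n A" "b = g n B" by blast
        with \<open>a \<noteq> b\<close> have "A \<noteq> B" by auto
        then have "A \<inter> B = {}" using Qd[of n] AB(1,2) by (simp add: disjoint_def)
        moreover have "A \<inter> Z n = {}" "B \<inter> Z n = {}" using QY[OF AB(1)] QY[OF AB(2)] disj[of n] by auto
        moreover have "g n A \<inter> g n B \<subseteq> (A \<union> Z n) \<inter> B \<union> A \<inter> (B \<union> Z n)"
          using \<open>A \<noteq> B\<close> unfolding g_def by auto
        ultimately show "a \<inter> b = {}" using AB(3,4) by blast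
      qed
      have "\<Union> (Q' n) = Y n" by (rule Qu)
      moreover have sub: "B \<subseteq> g n B" "g n B \<subseteq> B \<union> Z n" for B by (auto simp: g_def)
      moreover have "Z n \<subseteq> g n (B0 n)" by (simp add: g_def)
      ultimately have QuY: "\<Union> (Q' n) = Y n" and sub: "\<And>B. B \<subseteq> g n B" "\<And>B. g n B \<subseteq> B \<union> Z n"
        and Zs: "Z n \<subseteq> g n (B0 n)" by blast+
      have "\<Union> (g n ` Q' n) \<subseteq> Y n \<union> Z n"
      proof (rule UN_least)
        fix B assume "B \<in> Q' n"
        then show "g n B \<subseteq> Y n \<union> Z n" using sub(2)[of B] QY(1)[of B n] by blast
      qed
      moreover have "Y n \<subseteq> \<Union> (g n ` Q' n)"
      proof
        fix x assume "x \<in> Y n"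
        then obtain B where "B \<in> Q' n" "x \<in> B" using QuY by blast
        then show "x \<in> \<Union> (g n ` Q' n)" using sub(1)[of B] by blast
      qed
      moreover have "Z n \<subseteq> \<Union> (g n ` Q' n)" using Zs B0[of n] by blast
      ultimately show "\<Union> (g n ` Q' n) = space (M n)" using cover[of n] by blast
    qed
    have P'c: "coarser (P' n) (R n)" for n
      unfolding coarser_def
    proof
      fix A assume "A \<in> R n"
      then obtain A1 W where A: "A1 \<in> P n" "W \<in> {Y n, Z n}" "A = A1 \<inter> W" by (auto simp: R_def pjoin_def)
      show "\<exists>B\<in>P' n. A \<subseteq> B"
      proof (cases "W = Y n")
        case True
        have "Y n \<inter> A1 \<in> Q n" using P(2) A(1) by auto
        then obtain B where "B \<in> Q' n" "Y n \<inter> A1 \<subseteq> B" using Qc[of n] by (auto simp: coarser_def)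
        moreover have "A \<subseteq> g n B" using A True \<open>Y n \<inter> A1 \<subseteq> B\<close> by (auto simp: g_def)
        moreover have "g n B \<in> P' n" using \<open>B \<in> Q' n\<close> by (simp add: P'_def)
        ultimately show ?thesis by blast
      next
        case False
        then have "A \<subseteq> g n (B0 n)" using A by (auto simp: g_def)
        then show ?thesis using B0 by (auto simp: P'_def)
      qed
    qed
    have P'E: "P' \<in> E" using Ecoarse[OF R P'part P'c] .
    have "Q' n = (\<inter>) (Y n) ` P' n" for n
    proof -
      have "Y n \<inter> g n B = B" if "B \<in> Q' n" for B using QY[OF that] disj[of n] by (auto simp: g_def)
      then show ?thesis unfolding P'_def image_image by (simp cong: image_cong)
    qed
    then show "Q' \<in> EYL" using P'E unfolding EYL_def img by blast
  qed
  show "\<forall>P\<in>EYL. \<forall>m\<ge>1. (\<lambda>k. joinN nu f P k m) \<in> EYL"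
  proof (intro ballI allI impI)
    fix Q and m :: nat assume "Q \<in> EYL" "m \<ge> 1"
    then obtain P where P: "P \<in> E" "\<And>n. Q n = (\<inter>) (Y n) ` P n" unfolding EYL_def img by blast
    have "joinN nu f Q k m = (\<inter>) (Y k) ` joinN M f P k m" for k
    proof
      show "joinN nu f Q k m \<subseteq> (\<inter>) (Y k) ` joinN M f P k m"
      proof
        fix B assume "B \<in> joinN nu f Q k m"
        then obtain S where S: "\<forall>i<m. S i \<in> Q (k + i)" "B = Y k \<inter> (\<Inter>i\<in>{..<m}. fiter f k i -` S i)"
          unfolding joinN_def space_nu by blast
        have "\<forall>i. \<exists>A. i < m \<longrightarrow> A \<in> P (k+i) \<and> S i = Y (k+i) \<inter> A" using S(1) P(2) by blast
        then obtain A where A: "\<And>i. i < m \<Longrightarrow> A i \<in> P (k+i) \<and> S i = Y (k+i) \<inter> A i" by metis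
        have "(\<Inter>i\<in>{..<m}. fiter f k i -` S i) = (\<Inter>i\<in>{..<m}. fiter f k i -` (Y (k+i) \<inter> A i))"
          by (intro INF_cong refl) (simp add: A)
        then have "B = Y k \<inter> (\<Inter>i\<in>{..<m}. fiter f k i -` (Y (k+i) \<inter> A i))" using S(2) by simp
        also have "\<dots> = Y k \<inter> (space (M k) \<inter> (\<Inter>i\<in>{..<m}. fiter f k i -` A i))" by (rule join_Y)
        finally have B: "B = Y k \<inter> (space (M k) \<inter> (\<Inter>i\<in>{..<m}. fiter f k i -` A i))" .
        have "space (M k) \<inter> (\<Inter>i\<in>{..<m}. fiter f k i -` A i) \<in> joinN M f P k m"
          unfolding joinN_def mem_Collect_eq by (intro exI[of _ A] conjI refl allI impI) (simp add: A)
        then show "B \<in> (\<inter>) (Y k) ` joinN M f P k m" unfolding B by (rule imageI)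
      qed
      show "(\<inter>) (Y k) ` joinN M f P k m \<subseteq> joinN nu f Q k m"
      proof
        fix B assume "B \<in> (\<inter>) (Y k) ` joinN M f P k m"
        then obtain A where A: "\<forall>i<m. A i \<in> P (k + i)" "B = Y k \<inter> (space (M k) \<inter> (\<Inter>i\<in>{..<m}. fiter f k i -` A i))"
          unfolding joinN_def by blast
        have "B = Y k \<inter> (\<Inter>i\<in>{..<m}. fiter f k i -` (Y (k+i) \<inter> A i))" using A(2) join_Y by simp
        moreover have "\<forall>i<m. Y (k+i) \<inter> A i \<in> Q (k+i)" using A(1) P(2) by auto
        ultimately show "B \<in> joinN nu f Q k m" unfolding joinN_def space_nu mem_Collect_eq
          by (intro exI[of _ "\<lambda>i. Y (k+i) \<inter> A i"] conjI) simp_all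
      qed
    qed
    then show "(\<lambda>k. joinN nu f Q k m) \<in> EYL" using Ejoin[OF P(1) \<open>m \<ge> 1\<close>] unfolding EYL_def img mem_Collect_eq
      by (intro bexI[of _ "\<lambda>k. joinN M f P k m"] allI) simp_all
  qed
qed

lemma pe_sum: "part_entropy N P = (\<Sum>A\<in>P. - (measure N A * ln (measure N A)))"
  by (simp add: part_entropy_def sum_negf)

lemma joinN_sub_space: "B \<in> joinN N f P k n \<Longrightarrow> B \<subseteq> space (N k)"
  unfolding joinN_def by blast

lemma Jsub:
  assumes "P \<in> E" "n \<ge> 1"
  shows "joinN nu f (\<lambda>k. (\<inter>) (Y k) ` P k) 0 n \<subseteq> joinN M f (\<lambda>k. pjoin (P k) {Y k, Z k}) 0 n"
proof
  fix B assume "B \<in> joinN nu f (\<lambda>k. (\<inter>) (Y k) ` P k) 0 n"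
  then obtain S where S: "\<forall>i<n. S i \<in> (\<inter>) (Y i) ` P i" "B = Y 0 \<inter> (\<Inter>i\<in>{..<n}. fiter f 0 i -` S i)"
    unfolding joinN_def space_nu by auto
  have "\<forall>i. \<exists>A. i < n \<longrightarrow> A \<in> P i \<and> S i = Y i \<inter> A" using S(1) by blast
  then obtain A where A: "\<And>i. i < n \<Longrightarrow> A i \<in> P i \<and> S i = Y i \<inter> A i" by metis
  have "(\<Inter>i\<in>{..<n}. fiter f 0 i -` S i) = (\<Inter>i\<in>{..<n}. fiter f 0 i -` (A i \<inter> Y i))"
    by (intro INF_cong refl) (auto simp add: A)
  then have B1: "B = Y 0 \<inter> (\<Inter>i\<in>{..<n}. fiter f 0 i -` (A i \<inter> Y i))" using S(2) by simp
  have "B = space (M 0) \<inter> (\<Inter>i\<in>{..<n}. fiter f 0 i -` (A i \<inter> Y i))"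
  proof
    show "B \<subseteq> space (M 0) \<inter> (\<Inter>i\<in>{..<n}. fiter f 0 i -` (A i \<inter> Y i))" using B1 Ysub[of 0] by blast
    show "space (M 0) \<inter> (\<Inter>i\<in>{..<n}. fiter f 0 i -` (A i \<inter> Y i)) \<subseteq> B"
    proof
      fix x assume x: "x \<in> space (M 0) \<inter> (\<Inter>i\<in>{..<n}. fiter f 0 i -` (A i \<inter> Y i))"
      have "0 \<in> {..<n}" using assms(2) by simp
      then have "x \<in> fiter f 0 0 -` (A 0 \<inter> Y 0)" using x by blast
      then have "x \<in> Y 0" by simp
      then show "x \<in> B" using x B1 by blast
    qed
  qed
  moreover have "\<forall>i<n. A i \<inter> Y i \<in> pjoin (P (0 + i)) {Y (0 + i), Z (0 + i)}"
    using A unfolding pjoin_def by auto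
  ultimately show "B \<in> joinN M f (\<lambda>k. pjoin (P k) {Y k, Z k}) 0 n"
    unfolding joinN_def mem_Collect_eq by (intro exI[of _ "\<lambda>i. A i \<inter> Y i"] conjI) simp_all
qed

lemma Hineq:
  assumes "P \<in> E" "n \<ge> 1"
  shows "c * part_entropy (nu 0) (joinN nu f (\<lambda>k. (\<inter>) (Y k) ` P k) 0 n)
         \<le> part_entropy (M 0) (joinN M f (\<lambda>k. pjoin (P k) {Y k, Z k}) 0 n)"
proof -
  define Jn where "Jn = joinN nu f (\<lambda>k. (\<inter>) (Y k) ` P k) 0 n"
  define Jm where "Jm = joinN M f (\<lambda>k. pjoin (P k) {Y k, Z k}) 0 n"
  have R: "(\<lambda>k. pjoin (P k) {Y k, Z k}) \<in> E" using EYZ[OF assms(1)] .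
  have fin: "finite Jm" unfolding Jm_def
    by (rule joinN_finite) (use Epart[OF R] in \<open>simp add: is_partition_def\<close>)
  have sub: "Jn \<subseteq> Jm" using Jsub[OF assms] by (simp add: Jn_def Jm_def)
  have AY: "A \<subseteq> Y 0" if "A \<in> Jn" for A using joinN_sub_space[OF that[unfolded Jn_def]] space_nu by simp
  have "c * part_entropy (nu 0) Jn = (\<Sum>A\<in>Jn. c * - ((measure (M 0) A / c) * ln (measure (M 0) A / c)))"
    unfolding pe_sum sum_distrib_left
    by (intro sum.cong refl) (simp add: measure_nu AY)
  also have "\<dots> \<le> (\<Sum>A\<in>Jn. - (measure (M 0) A * ln (measure (M 0) A)))"
    by (intro sum_mono phi_scale c_pos c_le) simp
  also have "\<dots> \<le> (\<Sum>A\<in>Jm. - (measure (M 0) A * ln (measure (M 0) A)))"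
    by (intro sum_mono2 fin sub phi_nonneg measure_nonneg prob_space.prob_le_1[OF prob])
  finally show ?thesis unfolding Jn_def Jm_def pe_sum .
qed

lemma seq_ineq:
  assumes "P \<in> E"
  shows "ereal c * seq_entropy nu f (\<lambda>k. (\<inter>) (Y k) ` P k) \<le> seq_entropy M f (\<lambda>k. pjoin (P k) {Y k, Z k})"
  unfolding seq_entropy_def
proof -
  let ?a = "\<lambda>n. part_entropy (nu 0) (joinN nu f (\<lambda>k. (\<inter>) (Y k) ` P k) 0 n)"
  let ?b = "\<lambda>n. part_entropy (M 0) (joinN M f (\<lambda>k. pjoin (P k) {Y k, Z k}) 0 n)"
  have le: "ereal c * ereal (?a n / real n) \<le> ereal (?b n / real n)" for n
  proof (cases "n = 0")
    case False
    then have "c * ?a n \<le> ?b n" using Hineq[OF assms, of n] by simp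
    then have "(c * ?a n) / real n \<le> ?b n / real n" using divide_right_mono by force
    then show ?thesis by (simp add: times_divide_eq_right)
  qed simp
  have "ereal c * limsup (\<lambda>n. ereal (?a n / real n)) = limsup (\<lambda>n. ereal c * ereal (?a n / real n))"
    by (rule limsup_ereal_mult_left[symmetric]) (use c_pos in simp)
  also have "\<dots> \<le> limsup (\<lambda>n. ereal (?b n / real n))"
    by (intro Limsup_mono always_eventually allI le)
  finally show "ereal c * limsup (\<lambda>n. ereal (?a n / real n)) \<le> limsup (\<lambda>n. ereal (?b n / real n))" .
qed

lemma class_ineq: "ereal c * class_entropy nu f EYL \<le> class_entropy M f E"
proof -
  have "seq_entropy nu f Q \<le> ereal (1/c) * class_entropy M f E" if "Q \<in> EYL" for Q
  proof -
    obtain P where P0: "P \<in> E" "\<And>n. Q n = (\<inter>) (Y n) ` P n" using \<open>Q \<in> EYL\<close> unfolding EYL_def img by blast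
    have P: "P \<in> E" "Q = (\<lambda>k. (\<inter>) (Y k) ` P k)" using P0 by auto
    have R: "(\<lambda>k. pjoin (P k) {Y k, Z k}) \<in> E" using EYZ[OF P(1)] .
    have "ereal c * seq_entropy nu f Q \<le> class_entropy M f E"
      using seq_ineq[OF P(1)] SUP_upper[OF R, of "seq_entropy M f"] unfolding P(2) class_entropy_def
      by (rule order_trans)
    then have "ereal (1/c) * (ereal c * seq_entropy nu f Q) \<le> ereal (1/c) * class_entropy M f E"
      by (rule ereal_mult_left_mono) (use c_pos in simp)
    moreover have "ereal (1/c) * (ereal c * seq_entropy nu f Q) = seq_entropy nu f Q"
      using c_pos by (subst mult.assoc[symmetric]) simp
    ultimately show ?thesis by simp
  qed
  then have "class_entropy nu f EYL \<le> ereal (1/c) * class_entropy M f E"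
    unfolding class_entropy_def by (rule SUP_least)
  then have "ereal c * class_entropy nu f EYL \<le> ereal c * (ereal (1/c) * class_entropy M f E)"
    by (rule ereal_mult_left_mono) (use c_pos in simp)
  also have "\<dots> = class_entropy M f E"
    using c_pos by (subst mult.assoc[symmetric]) simp
  finally show ?thesis .
qed

lemma Jmeas:
  assumes "P \<in> E" "B \<in> joinN M f P 0 n"
  shows "B \<in> sets (M 0)"
proof -
  obtain S where S: "\<forall>i<n. S i \<in> P (0 + i)" "B = space (M 0) \<inter> (\<Inter>i\<in>{..<n}. fiter f 0 i -` S i)"
    using assms(2) unfolding joinN_def by blast
  have Ss: "S i \<in> sets (M i)" if "i < n" for i using S(1) that Epart[OF assms(1), of i] by (auto simp: is_partition_def)
  show ?thesis
  proof (cases "n = 0")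
    case True then show ?thesis using S(2) by simp
  next
    case False
    have "B = (\<Inter>i\<in>{..<n}. fiter f 0 i -` S i \<inter> space (M 0))" using S(2) False by auto
    also have "\<dots> \<in> sets (M 0)"
    proof (rule sets.finite_INT)
      fix i assume "i \<in> {..<n}"
      then show "fiter f 0 i -` S i \<inter> space (M 0) \<in> sets (M 0)"
        using measurable_sets[OF fiter_meas[OF nds, of 0 i]] Ss[of i] by simp
    qed (use False in auto)
    finally show ?thesis .
  qed
qed

lemma Jdisj:
  assumes "P \<in> E" "B1 \<in> joinN M f P 0 n" "B2 \<in> joinN M f P 0 n" "B1 \<noteq> B2"
  shows "B1 \<inter> B2 = {}"
proof -
  obtain S1 where S1: "\<forall>i<n. S1 i \<in> P (0 + i)" "B1 = space (M 0) \<inter> (\<Inter>i\<in>{..<n}. fiter f 0 i -` S1 i)"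
    using assms(2) unfolding joinN_def by blast
  obtain S2 where S2: "\<forall>i<n. S2 i \<in> P (0 + i)" "B2 = space (M 0) \<inter> (\<Inter>i\<in>{..<n}. fiter f 0 i -` S2 i)"
    using assms(3) unfolding joinN_def by blast
  have "\<exists>i<n. S1 i \<noteq> S2 i"
  proof (rule ccontr)
    assume "\<not> (\<exists>i<n. S1 i \<noteq> S2 i)"
    then have "(\<Inter>i\<in>{..<n}. fiter f 0 i -` S1 i) = (\<Inter>i\<in>{..<n}. fiter f 0 i -` S2 i)"
      by (intro INF_cong refl) auto
    then show False using S1(2) S2(2) assms(4) by simp
  qed
  then obtain i where i: "i < n" "S1 i \<noteq> S2 i" by blast
  have "disjoint (P i)" using Epart[OF assms(1), of i] by (simp add: is_partition_def)
  then have "S1 i \<inter> S2 i = {}" using S1(1) S2(1) i unfolding disjoint_def by simp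
  moreover have "B1 \<inter> B2 \<subseteq> fiter f 0 i -` (S1 i \<inter> S2 i)" using S1(2) S2(2) i(1) by blast
  ultimately show ?thesis by blast
qed

lemma c1_meas:
  assumes "c = 1" "B \<in> sets (M 0)"
  shows "measure (M 0) (Y 0 \<inter> B) = measure (M 0) B"
proof -
  interpret P: prob_space "M 0" by (rule prob)
  have "measure (M 0) (Y 0 \<union> Z 0) = measure (M 0) (Y 0) + measure (M 0) (Z 0)"
    using Ymeas Zmeas disj by (intro P.finite_measure_Union) auto
  then have Z0: "measure (M 0) (Z 0) = 0" using cover[of 0] P.prob_space muY[of 0] assms(1) by simp
  have "B \<subseteq> space (M 0)" using assms(2) by (rule sets.sets_into_space)
  then have eqB: "(Y 0 \<inter> B) \<union> (Z 0 \<inter> B) = B" using cover[of 0] by blast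
  have U: "measure (M 0) ((Y 0 \<inter> B) \<union> (Z 0 \<inter> B)) = measure (M 0) (Y 0 \<inter> B) + measure (M 0) (Z 0 \<inter> B)"
    by (rule P.finite_measure_Union) (use Ymeas Zmeas disj assms(2) in auto)
  then have "measure (M 0) B = measure (M 0) (Y 0 \<inter> B) + measure (M 0) (Z 0 \<inter> B)"
    unfolding eqB .
  moreover have "measure (M 0) (Z 0 \<inter> B) \<le> measure (M 0) (Z 0)"
    using Zmeas by (intro P.finite_measure_mono) auto
  moreover have "measure (M 0) (Z 0 \<inter> B) \<ge> 0" by simp
  ultimately show ?thesis using Z0 by simp
qed

lemma c1_img:
  assumes "P \<in> E" "B \<in> joinN M f P 0 n"
  shows "Y 0 \<inter> B \<in> joinN nu f (\<lambda>k. (\<inter>) (Y k) ` P k) 0 n"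
proof -
  obtain S where S: "\<forall>i<n. S i \<in> P (0 + i)" "B = space (M 0) \<inter> (\<Inter>i\<in>{..<n}. fiter f 0 i -` S i)"
    using assms(2) unfolding joinN_def by blast
  have "Y 0 \<inter> B = Y 0 \<inter> (\<Inter>i\<in>{..<n}. fiter f 0 i -` (Y (0+i) \<inter> S i))"
    using S(2) join_Y[where k=0 and m=n and A=S] by simp
  moreover have "\<forall>i<n. Y (0+i) \<inter> S i \<in> (\<inter>) (Y (0+i)) ` P (0+i)" using S(1) by blast
  ultimately show ?thesis unfolding joinN_def space_nu mem_Collect_eq
    by (intro exI[of _ "\<lambda>i. Y (0+i) \<inter> S i"] conjI) simp_all
qed

lemma Hineq1:
  assumes "c = 1" "P \<in> E"
  shows "part_entropy (M 0) (joinN M f P 0 n) \<le> part_entropy (nu 0) (joinN nu f (\<lambda>k. (\<inter>) (Y k) ` P k) 0 n)"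
proof -
  define Jn where "Jn = joinN nu f (\<lambda>k. (\<inter>) (Y k) ` P k) 0 n"
  define Jm where "Jm = joinN M f P 0 n"
  define h where "h A = - (measure (M 0) A * ln (measure (M 0) A))" for A
  define J' where "J' = {B\<in>Jm. measure (M 0) B \<noteq> 0}"
  have finm: "finite Jm" unfolding Jm_def
    by (rule joinN_finite) (use Epart[OF assms(2)] in \<open>simp add: is_partition_def\<close>)
  have finn: "finite Jn" unfolding Jn_def
    by (rule joinN_finite) (use Epart[OF assms(2)] in \<open>simp add: is_partition_def\<close>)
  have "(\<Sum>A\<in>Jm. h A) = (\<Sum>A\<in>J'. h A)"
    by (rule sum.mono_neutral_right[OF finm]) (auto simp: J'_def h_def)
  also have "\<dots> = (\<Sum>A\<in>J'. h (Y 0 \<inter> A))"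
  proof (intro sum.cong refl)
    fix A assume "A \<in> J'"
    then have "A \<in> sets (M 0)" using Jmeas[OF assms(2)] unfolding J'_def Jm_def by blast
    then show "h A = h (Y 0 \<inter> A)" using c1_meas[OF assms(1)] by (simp add: h_def)
  qed
  also have "\<dots> = (\<Sum>A\<in>(\<inter>) (Y 0) ` J'. h A)"
  proof (rule sum.reindex[symmetric, unfolded comp_def])
    show "inj_on ((\<inter>) (Y 0)) J'"
    proof (rule inj_onI)
      fix B1 B2 assume B: "B1 \<in> J'" "B2 \<in> J'" "Y 0 \<inter> B1 = Y 0 \<inter> B2"
      show "B1 = B2"
      proof (rule ccontr)
        assume "B1 \<noteq> B2"
        then have "B1 \<inter> B2 = {}" using Jdisj[OF assms(2)] B(1,2) by (auto simp: J'_def Jm_def)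
        then have "Y 0 \<inter> B1 = {}" using B(3) by blast
        moreover have "B1 \<in> sets (M 0)" using Jmeas[OF assms(2)] B(1) unfolding J'_def Jm_def by blast
        then have "measure (M 0) (Y 0 \<inter> B1) = measure (M 0) B1" by (rule c1_meas[OF assms(1)])
        ultimately have "measure (M 0) B1 = 0" by simp
        then show False using B(1) by (simp add: J'_def)
      qed
    qed
  qed
  also have "\<dots> \<le> (\<Sum>A\<in>Jn. h A)"
  proof (rule sum_mono2[OF finn])
    show "(\<inter>) (Y 0) ` J' \<subseteq> Jn" using c1_img[OF assms(2)] by (auto simp: J'_def Jm_def Jn_def)
    show "0 \<le> h b" for b unfolding h_def
      by (intro phi_nonneg measure_nonneg prob_space.prob_le_1[OF prob])
  qed
  also have "\<dots> = part_entropy (nu 0) Jn"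
  proof -
    have AY: "A \<subseteq> Y 0" if "A \<in> Jn" for A using joinN_sub_space[OF that[unfolded Jn_def]] space_nu by simp
    show ?thesis unfolding pe_sum h_def
    proof (intro sum.cong refl)
      fix x assume "x \<in> Jn"
      have "measure (nu 0) x = measure (M 0) x" using measure_nu[OF AY[OF \<open>x \<in> Jn\<close>]] assms(1) by simp
      then show "- (measure (M 0) x * ln (measure (M 0) x)) = - (measure (nu 0) x * ln (measure (nu 0) x))" by simp
    qed
  qed
  finally show ?thesis unfolding Jn_def Jm_def pe_sum h_def .
qed

lemma class_ge1:
  assumes "c = 1"
  shows "class_entropy M f E \<le> class_entropy nu f EYL"
  unfolding class_entropy_def
proof (rule SUP_least)
  fix P assume P: "P \<in> E"
  let ?Q = "\<lambda>k. (\<inter>) (Y k) ` P k"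
  have Q: "?Q \<in> EYL" using P unfolding EYL_def img by blast
  let ?a = "\<lambda>n. part_entropy (M 0) (joinN M f P 0 n)"
  let ?b = "\<lambda>n. part_entropy (nu 0) (joinN nu f ?Q 0 n)"
  have le: "ereal (?a n / real n) \<le> ereal (?b n / real n)" for n
  proof -
    have "?a n \<le> ?b n" by (rule Hineq1[OF assms P])
    then show ?thesis using divide_right_mono by force
  qed
  have "seq_entropy M f P \<le> seq_entropy nu f ?Q"
    unfolding seq_entropy_def by (intro Limsup_mono always_eventually allI le)
  also have "\<dots> \<le> (SUP Q\<in>EYL. seq_entropy nu f Q)" by (rule SUP_upper[OF Q])
  finally show "seq_entropy M f P \<le> (SUP Q\<in>EYL. seq_entropy nu f Q)" .
qed

end


theorem mainTheorem6:
  fixes M :: "nat \<Rightarrow> 'a measure" and f :: "nat \<Rightarrow> 'a \<Rightarrow> 'a"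
    and Y Z :: "nat \<Rightarrow> 'a set" and c :: real
    and E :: "(nat \<Rightarrow> 'a set set) set"
  assumes nds: "metric_NDS M f"
    and Ymeas: "\<And>n. Y n \<in> sets (M n)" and Zmeas: "\<And>n. Z n \<in> sets (M n)"
    and disj: "\<And>n. Y n \<inter> Z n = {}" and cover: "\<And>n. Y n \<union> Z n = space (M n)"
    and fY: "\<And>n. f n ` Y n \<subseteq> Y (Suc n)" and fZ: "\<And>n. f n ` Z n \<subseteq> Z (Suc n)"
    and c_pos: "0 < c" and c_le: "c \<le> 1"
    and muY: "\<And>n. measure (M n) (Y n) = c"
    and adm: "admissible M f E"
    and EYZ: "\<And>P. P \<in> E \<Longrightarrow> (\<lambda>n. pjoin (P n) {Y n, Z n}) \<in> E"
  defines "\<nu> \<equiv> (\<lambda>n. scale_measure (ennreal (1 / c)) (restrict_space (M n) (Y n)))"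
    and "EY \<equiv> {Q. \<exists>P\<in>E. \<forall>n. Q n = {Y n \<inter> A | A. A \<in> P n}}"
  shows "metric_NDS \<nu> f \<and> admissible \<nu> f EY
         \<and> ereal c * class_entropy \<nu> f EY \<le> class_entropy M f E
         \<and> (c = 1 \<longrightarrow> ereal c * class_entropy \<nu> f EY = class_entropy M f E)"
proof -
  interpret T6 M f Y Z c E
    by unfold_locales (use nds Ymeas Zmeas disj cover fY fZ c_pos c_le muY adm EYZ in auto)
  have e1: "\<nu> = nu" unfolding nu_def by (simp add: assms)
  have e2: "EY = T6.EYL Y E" unfolding EYL_def by (simp add: assms)
  show ?thesis unfolding e1 e2
    using nds_nu adm_nu class_ineq class_ge1 by (auto intro: antisym)
qed

end
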